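(* Let $n\ge 3$ and for each $i=1,\ldots,n$ let $\{m_{i,j}\}_{j=1}^{\infty}$ be a sequence of real numbers with $0<m_{i,1}<m_{i,2}<\cdots$ and $\sum_{j=1}^{\infty}1/m_{i,j}=\infty$. Then any $n$-dimensional distribution function $H$ on $\mathbb{R}_+^n$ is uniquely determined by the countably many values $\{\mathcal{L}_H(s_1,\ldots,s_n): s_i=m_{i,j},\ i=1,\ldots,n,\ j\in\mathbb{N}\}$ of its Laplace–Stieltjes transform (where for each coordinate $i$ the index $j$ ranges independently over $\mathbb{N}$); i.e., two such distributions whose Laplace–Stieltjes transforms agree at all points $(m_{1,j_1},\ldots,m_{n,j_n})$, $j_1,\ldots,j_n\in\mathbb{N}$, coincide.
   Context: For a random vector $(X_1,\ldots,X_n)$ in $[0,\infty)^n$ with joint distribution function $H$, the Laplace–Stieltjes transform is $\mathcal{L}_H(s_1,\ldots,s_n)={\bf E}[\exp(-\sum_{i=1}^n s_iX_i)]$, $s_i>0$. *)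

theory Defs
  imports "HOL-Probability.Probability"
begin

definition laplace_stieltjes :: "(real ^ 'n) measure \<Rightarrow> real ^ 'n \<Rightarrow> real" where
  "laplace_stieltjes M s = (\<integral>x. exp (- (\<Sum>i\<in>UNIV. s $ i * x $ i)) \<partial>M)"

definition distribution_on_Rplus :: "(real ^ 'n) measure \<Rightarrow> bool" where
  "distribution_on_Rplus M \<longleftrightarrow>
     sets M = sets borel \<and> prob_space M \<and> (AE x in M. \<forall>i. 0 \<le> x $ i)"

end

theory Submission
  imports Defs "HOL-Complex_Analysis.Complex_Analysis"
begin



lemma exp_rem_bound:
  fixes w :: complex
  shows "norm (exp w - 1 - w) \<le> norm w ^ 2 * exp (norm w)"
proof -
  have s1: "(\<lambda>k. w^(k+2) /\<^sub>R fact (k+2)) sums (exp w - (\<Sum>k<2. w^k /\<^sub>R fact k))"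
    by (intro sums_split_initial_segment exp_converges)
  have e: "exp w - 1 - w = (\<Sum>k. w^(k+2) /\<^sub>R fact (k+2))"
    using s1 by (simp add: sums_iff eval_nat_numeral)
  have s2: "(\<lambda>k. norm w^2 * (norm w^k /\<^sub>R fact k)) sums (norm w^2 * exp (norm w))"
    using exp_converges[of "norm w"] by (rule sums_mult)
  have b: "norm (w^(k+2) /\<^sub>R fact (k+2)) \<le> norm w^2 * (norm w^k /\<^sub>R fact k)" for k
  proof -
    have f: "fact k \<le> (fact (k+2) :: real)" by (intro fact_mono) auto
    have "norm (w^(k+2) /\<^sub>R fact (k+2)) = norm w^(k+2) / fact (k+2)"
      by (simp add: norm_power norm_mult divide_inverse mult_ac del: fact_Suc of_nat_Suc)
    also have "\<dots> = norm w^2 * norm w^k / fact (k+2)"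
      by (simp add: power_add power2_eq_square mult_ac del: fact_Suc of_nat_Suc)
    also have "\<dots> \<le> norm w^2 * norm w^k / fact k"
      using f by (intro divide_left_mono) auto
    also have "\<dots> = norm w^2 * (norm w^k /\<^sub>R fact k)" by (simp add: divide_inverse mult_ac)
    finally show ?thesis .
  qed
  have "norm (\<Sum>k. w^(k+2) /\<^sub>R fact (k+2)) \<le> (\<Sum>k. norm w^2 * (norm w^k /\<^sub>R fact k))"
    using b s2 by (intro norm_suminf_le) (auto simp: sums_iff)
  then show ?thesis using e s2 by (simp add: sums_iff)
qed



lemma phi_re_pos:
  fixes w :: complex and b :: real
  assumes "norm w < 1" "0 < b"
  shows "0 < Re (of_real b * (1 + w) / (1 - w))"
proof -
  have w1: "w \<noteq> 1" using assms by auto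
  have "(Re w)^2 + (Im w)^2 < 1"
    using assms(1) by (simp add: cmod_def)
  hence "b * ((Re w)^2 + (Im w)^2) < b * 1"
    using assms(2) by (intro mult_strict_left_mono) auto
  hence num: "0 < b * ((1 + Re w) * (1 - Re w) - Im w * Im w)"
    by (simp add: power2_eq_square algebra_simps)
  have den: "0 < (cmod (1 - w))^2" using w1 by simp
  hence den': "0 < (Im w)^2 + (1 - Re w)^2" by (simp add: cmod_power2)
  have "Re (of_real b * (1 + w) / (1 - w)) = (b - (b * (Im w * Im w) + b * (Re w * Re w))) / ((Im w)^2 + (1 - Re w)^2)"
    by (simp add: Re_divide cmod_power2 algebra_simps)
  also have "\<dots> > 0" using num den' by (intro divide_pos_pos) (auto simp: algebra_simps)
  finally show ?thesis .
qed

lemma schwarz_half: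
  fixes f :: "complex \<Rightarrow> complex" and b :: real
  assumes hol: "f holomorphic_on {z. 0 < Re z}"
    and bd: "\<And>z. 0 < Re z \<Longrightarrow> norm (f z) \<le> C"
    and b: "0 < b" and fb: "f (of_real b) = 0" and z: "0 < Re z"
  shows "norm (f z) \<le> C * norm ((z - of_real b) / (z + of_real b))"
proof -
  define \<xi> where "\<xi> = (z - of_real b) / (z + of_real b)"
  have zb: "z + of_real b \<noteq> 0" using z b by (metis add_pos_pos of_real_0 of_real_def plus_complex.simps(1) zero_complex.simps(1) Re_complex_of_real less_irrefl)
  have e4: "(Re z + b)^2 - (Re z - b)^2 = 4*b*Re z" by (simp add: power2_eq_square algebra_simps)
  have "0 < 4*b*Re z" using z b by simp
  hence "(Re z - b)^2 + (Im z)^2 < (Re z + b)^2 + (Im z)^2" using e4 by linarith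
  hence "(cmod (z - of_real b))^2 < (cmod (z + of_real b))^2"
    by (simp add: cmod_power2)
  hence "cmod (z - of_real b) < cmod (z + of_real b)"
    by (meson norm_ge_zero power_less_imp_less_base)
  hence xi1: "norm \<xi> < 1" using zb by (simp add: \<xi>_def norm_divide divide_less_eq)
  have p: "1 + \<xi> = 2*z/(z + of_real b)" using zb by (simp add: \<xi>_def field_simps)
  have mm: "1 - \<xi> = 2 * of_real b/(z + of_real b)" using zb by (simp add: \<xi>_def field_simps)
  have b0: "(of_real b :: complex) \<noteq> 0" using b by simp
  have phixi: "of_real b * (1 + \<xi>) / (1 - \<xi>) = z"
  proof -
    have y0: "2 * of_real b / (z + of_real b) \<noteq> 0" using zb b0 by simp
    have "of_real b * (2*z/(z + of_real b)) = z * (2 * of_real b/(z + of_real b))" by (simp add: algebra_simps)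
    thus ?thesis unfolding p mm using y0 by simp
  qed
  have C0: "0 \<le> C" using bd[OF z] norm_ge_zero order_trans by blast
  have main: "norm (f z) \<le> C' * norm \<xi>" if C': "C < C'" for C'
  proof -
    have C'0: "0 < C'" using C0 C' by linarith
    define g where "g w = f (of_real b * (1 + w) / (1 - w)) / of_real C'" for w
    have "(\<lambda>w. of_real b * (1 + w) / (1 - w)) holomorphic_on ball 0 1"
      by (intro holomorphic_intros) auto
    moreover have "(\<lambda>w. of_real b * (1 + w) / (1 - w)) ` ball 0 1 \<subseteq> {z. 0 < Re z}"
      using phi_re_pos b by auto
    ultimately have "(f \<circ> (\<lambda>w. of_real b * (1 + w) / (1 - w))) holomorphic_on ball 0 1"
      using hol by (intro holomorphic_on_compose_gen) auto
    hence hg: "g holomorphic_on ball 0 1"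
      unfolding g_def by (intro holomorphic_intros) (auto simp: o_def)
    have g0: "g 0 = 0" using fb by (simp add: g_def)
    have gl: "norm (g w) < 1" if "norm w < 1" for w
    proof -
      have "norm (f (of_real b * (1 + w) / (1 - w))) \<le> C"
        using bd phi_re_pos[OF that b] by blast
      thus ?thesis using C' C'0 by (simp add: g_def norm_divide divide_less_eq)
    qed
    have "norm (g \<xi>) \<le> norm \<xi>"
      using Schwarz_Lemma(1)[OF hg g0 gl xi1] .
    thus ?thesis using phixi C'0 by (simp add: g_def norm_divide divide_le_eq mult_ac)
  qed
  show ?thesis unfolding \<xi>_def[symmetric]
  proof (rule field_le_epsilon)
    fix e :: real assume e: "0 < e"
    have "norm (f z) \<le> (C + e) * norm \<xi>" using main e by simp
    also have "\<dots> \<le> C * norm \<xi> + e" using xi1 e by (simp add: algebra_simps)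
    finally show "norm (f z) \<le> C * norm \<xi> + e" .
  qed
qed

lemma prod_bound:
  fixes m :: "nat \<Rightarrow> real"
  assumes sm: "strict_mono m" and m0: "0 < m 0"
  shows "f holomorphic_on {z. 0 < Re z} \<Longrightarrow> (\<And>z. 0 < Re z \<Longrightarrow> norm (f z) \<le> C)
    \<Longrightarrow> (\<And>j. j < N \<Longrightarrow> f (of_real (m j)) = 0) \<Longrightarrow> 0 < Re z
    \<Longrightarrow> norm (f z) \<le> C * (\<Prod>j<N. norm ((z - of_real (m j)) / (z + of_real (m j))))"
proof (induction N arbitrary: f z)
  case 0
  then show ?case by simp
next
  case (Suc N)
  let ?H = "{z::complex. 0 < Re z}"
  have mpos: "0 < m j" for j using m0 sm by (metis le0 order_less_le_trans strict_mono_less_eq)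
  define b where "b = m N"
  have b: "0 < b" using mpos by (simp add: b_def)
  have fb: "f (of_real b) = 0" using Suc.prems(3) by (simp add: b_def)
  have "norm (f 1) \<le> C" using Suc.prems(2)[of 1] by simp
  hence C0: "0 \<le> C" by (meson norm_ge_zero order_trans)
  have bH: "of_real b \<in> ?H" using b by simp
  have oH: "open ?H" using open_halfspace_Re_gt[of 0] by simp
  define g where "g z = (if z = of_real b then deriv f (of_real b) else (f z - f (of_real b)) / (z - of_real b)) * (z + of_real b)" for z
  have hg: "g holomorphic_on ?H"
    unfolding g_def by (intro holomorphic_intros pole_lemma_open Suc.prems(1) oH)
  have gbd1: "norm (g z) \<le> C" if z: "0 < Re z" "z \<noteq> of_real b" for z
  proof -
    have zb: "z + of_real b \<noteq> 0" using z b by (metis Re_complex_of_real add_pos_pos less_irrefl plus_complex.simps(1) zero_complex.simps(1))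
    have zb': "z - of_real b \<noteq> 0" using z by simp
    have "norm (f z) \<le> C * norm ((z - of_real b) / (z + of_real b))"
      using schwarz_half[OF Suc.prems(1) Suc.prems(2) b fb z(1)] by simp
    hence h1: "norm (f z) * norm (z + of_real b) \<le> C * norm (z - of_real b)"
      using zb by (simp add: norm_divide pos_le_divide_eq)
    have e: "g z = f z * (z + of_real b) / (z - of_real b)" using z fb by (simp add: g_def)
    have "norm (g z) = norm (f z) * norm (z + of_real b) / norm (z - of_real b)"
      by (simp add: e norm_mult norm_divide)
    also have "\<dots> \<le> C * norm (z - of_real b) / norm (z - of_real b)"
      using h1 by (intro divide_right_mono) auto
    also have "\<dots> = C" using zb' by simp
    finally show ?thesis .
  qed
  have gbd: "norm (g z) \<le> C" if z: "0 < Re z" for z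
  proof (cases "z = of_real b")
    case False thus ?thesis using gbd1 z by blast
  next
    case True
    have "isCont g (of_real b)"
      using holomorphic_on_imp_continuous_on[OF hg] continuous_on_eq_continuous_at[OF oH] bH by blast
    hence lim: "(g \<longlongrightarrow> g (of_real b)) (at (of_real b))" by (simp add: isCont_def)
    have ev: "\<forall>\<^sub>F y in at (of_real b). y \<in> ?H" using eventually_at_in_open'[OF oH bH] .
    have "\<forall>\<^sub>F y in at (of_real b). y \<noteq> of_real b" by (simp add: eventually_at_filter)
    with ev have "\<forall>\<^sub>F y in at (of_real b). norm (g y) \<le> C"
      by eventually_elim (use gbd1 in auto)
    from Lim_norm_ubound[OF _ lim this] True show ?thesis by simp
  qed
  have gz: "g (of_real (m j)) = 0" if "j < N" for j
  proof -
    have "m j \<noteq> b" using sm that by (simp add: b_def strict_mono_less[OF sm] less_imp_neq)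
    hence "(of_real (m j) :: complex) \<noteq> of_real b" by simp
    thus ?thesis using Suc.prems(3)[of j] that fb by (simp add: g_def)
  qed
  have IH: "norm (g z) \<le> C * (\<Prod>j<N. norm ((z - of_real (m j)) / (z + of_real (m j))))"
    using Suc.IH[of g z] hg gbd gz Suc.prems(4) by blast
  show ?case
  proof (cases "z = of_real b")
    case True
    thus ?thesis using fb C0 by (simp add: prod_nonneg)
  next
    case False
    have zb: "z + of_real b \<noteq> 0" using Suc.prems(4) b by (metis Re_complex_of_real add_pos_pos less_irrefl plus_complex.simps(1) zero_complex.simps(1))
    have zb': "z - of_real b \<noteq> 0" using False by simp
    have e: "g z = f z * (z + of_real b) / (z - of_real b)" using False fb by (simp add: g_def)
    have "f z = g z * ((z - of_real b) / (z + of_real b))"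
      using zb zb' by (simp add: e)
    hence "norm (f z) = norm (g z) * norm ((z - of_real b) / (z + of_real b))" by (metis norm_mult)
    also have "\<dots> \<le> C * (\<Prod>j<N. norm ((z - of_real (m j)) / (z + of_real (m j)))) * norm ((z - of_real b) / (z + of_real b))"
      using IH by (intro mult_right_mono) auto
    also have "\<dots> = C * (\<Prod>j<Suc N. norm ((z - of_real (m j)) / (z + of_real (m j))))"
      by (simp add: b_def mult_ac)
    finally show ?thesis .
  qed
qed



lemma factor_le:
  fixes a m c :: real
  assumes a: "0 < a" and m: "0 < m" and c: "0 < c" "c \<le> a" "c * a \<le> m^2"
  shows "\<bar>a - m\<bar> / (a + m) \<le> exp (- (c / m))"
proof -
  have key: "(a \<le> m \<longrightarrow> c * (a + m) \<le> 2 * a * m) \<and> (\<not> a \<le> m \<longrightarrow> c * (a + m) \<le> 2 * m^2)"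
  proof (cases "a \<le> m")
    case True
    have "c * (a + m) \<le> a * (a + m)" using c a m by (intro mult_right_mono) auto
    also have "\<dots> \<le> a * (2 * m)" using True a by (intro mult_left_mono) auto
    finally show ?thesis using True by (simp add: mult_ac)
  next
    case False
    have "c * (a + m) * a \<le> m^2 * (a + m)" using c a m by (simp add: mult_right_mono mult_ac)
    also have "\<dots> \<le> m^2 * (2 * a)" using False by (intro mult_left_mono) auto
    finally have "c * (a + m) * a \<le> (2 * m^2) * a" by (simp add: mult_ac)
    hence "c * (a + m) \<le> 2 * m^2" using a by simp
    thus ?thesis using False by simp
  qed
  have "\<bar>a - m\<bar> / (a + m) \<le> 1 - c / m"
  proof (cases "a \<le> m")
    case True
    hence "c * (a + m) \<le> 2 * a * m" using key by auto
    hence "(m - a) * m \<le> (m - c) * (a + m)" by (simp add: algebra_simps)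
    moreover have "0 \<le> m * (m - c)" using c True m by simp
    ultimately show ?thesis using True a m by (simp add: divide_simps abs_if)
  next
    case False
    hence "c * (a + m) \<le> 2 * m^2" using key by auto
    hence "(a - m) * m \<le> (m - c) * (a + m)" by (simp add: algebra_simps power2_eq_square)
    thus ?thesis using False a m by (simp add: divide_simps abs_if)
  qed
  also have "\<dots> \<le> exp (- (c / m))" using exp_ge_add_one_self[of "- (c / m)"] by simp
  finally show ?thesis .
qed

lemma prod_small:
  fixes m :: "nat \<Rightarrow> real"
  assumes sm: "strict_mono m" and m0: "0 < m 0" and ns: "\<not> summable (\<lambda>j. 1 / m j)"
    and a: "0 < a" and e: "0 < e"
  shows "\<exists>N. (\<Prod>j<N. \<bar>a - m j\<bar> / (a + m j)) < e"
proof -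
  have mge: "m 0 \<le> m j" for j using sm by (simp add: strict_mono_less_eq)
  have mpos: "0 < m j" for j using m0 mge[of j] by linarith
  define c where "c = min a (m 0 ^ 2 / a)"
  have c0: "0 < c" using a m0 by (simp add: c_def)
  have ca: "c \<le> a" by (simp add: c_def)
  have cm: "c * a \<le> m j ^ 2" for j
  proof -
    have "c * a \<le> m 0 ^ 2 / a * a" using a by (intro mult_right_mono) (auto simp: c_def)
    also have "\<dots> = m 0 ^ 2" using a by simp
    also have "\<dots> \<le> m j ^ 2" using mge[of j] m0 by (intro power_mono) auto
    finally show ?thesis .
  qed
  define B where "B = - ln e / c"
  obtain N where N: "B < (\<Sum>j<N. 1 / m j)"
  proof (rule ccontr)
    assume "\<not> thesis"
    hence "\<And>N. (\<Sum>j<N. 1 / m j) \<le> B" using that by (meson not_less)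
    hence "summable (\<lambda>j. 1 / m j)" using mpos by (intro summableI_nonneg_bounded[where x = B]) (auto intro: less_imp_le)
    thus False using ns by simp
  qed
  have "(\<Prod>j<N. \<bar>a - m j\<bar> / (a + m j)) \<le> (\<Prod>j<N. exp (- (c / m j)))"
  proof (intro prod_mono conjI)
    fix j show "0 \<le> \<bar>a - m j\<bar> / (a + m j)" using a mpos[of j] by simp
    show "\<bar>a - m j\<bar> / (a + m j) \<le> exp (- (c / m j))" using factor_le[OF a mpos c0 ca cm] .
  qed
  also have "\<dots> = exp (- (c * (\<Sum>j<N. 1 / m j)))"
    by (simp add: exp_sum[symmetric] sum_negf sum_distrib_left)
  also have "\<dots> < exp (ln e)"
  proof -
    have "c * B < c * (\<Sum>j<N. 1 / m j)" using N c0 by simp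
    moreover have "c * B = - ln e" using c0 by (simp add: B_def)
    ultimately show ?thesis by simp
  qed
  also have "\<dots> = e" using e by simp
  finally show ?thesis by blast
qed



lemma halfplane_unique:
  fixes m :: "nat \<Rightarrow> real" and f :: "complex \<Rightarrow> complex"
  assumes sm: "strict_mono m" and m0: "0 < m 0" and ns: "\<not> summable (\<lambda>j. 1 / m j)"
    and hol: "f holomorphic_on {z. 0 < Re z}" and bd: "\<And>z. 0 < Re z \<Longrightarrow> norm (f z) \<le> C"
    and zeros: "\<And>j. f (of_real (m j)) = 0" and a: "0 < a"
  shows "f (of_real a) = 0"
proof -
  have "norm (f 1) \<le> C" using bd[of 1] by simp
  hence C0: "0 \<le> C" by (meson norm_ge_zero order_trans)
  have mpos: "0 < m j" for j using m0 sm by (metis le0 order_less_le_trans strict_mono_less_eq)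
  have nrm: "norm ((complex_of_real a - of_real (m j)) / (of_real a + of_real (m j))) = \<bar>a - m j\<bar> / (a + m j)" for j
  proof -
    have "norm ((complex_of_real a - of_real (m j)) / (of_real a + of_real (m j))) = norm (complex_of_real ((a - m j) / (a + m j)))"
      by (simp only: of_real_divide of_real_diff of_real_add)
    also have "\<dots> = \<bar>a - m j\<bar> / (a + m j)" using a mpos[of j] by (subst norm_of_real) (simp add: abs_divide)
    finally show ?thesis .
  qed
  have "norm (f (of_real a)) \<le> e" if e: "0 < e" for e
  proof -
    obtain N where N: "(\<Prod>j<N. \<bar>a - m j\<bar> / (a + m j)) < e / (C + 1)"
      using prod_small[OF sm m0 ns a, of "e / (C + 1)"] e C0 by auto
    have "norm (f (of_real a)) \<le> C * (\<Prod>j<N. norm ((complex_of_real a - of_real (m j)) / (of_real a + of_real (m j))))"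
      using prod_bound[OF sm m0, of f C N "of_real a"] hol bd zeros a by simp
    also have "\<dots> = C * (\<Prod>j<N. \<bar>a - m j\<bar> / (a + m j))" by (simp add: nrm)
    also have "\<dots> \<le> (C + 1) * (\<Prod>j<N. \<bar>a - m j\<bar> / (a + m j))"
      using a mpos by (intro mult_right_mono prod_nonneg) (auto intro!: divide_nonneg_pos add_pos_pos)
    also have "\<dots> \<le> (C + 1) * (e / (C + 1))" using N C0 by (intro mult_left_mono) auto
    also have "\<dots> = e" using C0 by simp
    finally show ?thesis .
  qed
  hence "\<And>e. 0 < e \<Longrightarrow> norm (f (of_real a)) \<le> 0 + e" by simp
  hence "norm (f (of_real a)) \<le> 0" by (rule field_le_epsilon)
  thus ?thesis by simp
qed




lemma u2_exp_bound:
  fixes u \<sigma> :: real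
  assumes u: "0 \<le> u" and s: "0 < \<sigma>"
  shows "u^2 * exp (- (\<sigma> * u / 2)) \<le> 8 / \<sigma>^2"
proof -
  define E where "E = exp (\<sigma> * u / 2)"
  have E0: "0 < E" by (simp add: E_def)
  have t0: "0 \<le> \<sigma> * u / 2" using u s by simp
  have t2: "(\<sigma> * u / 2)^2 / 2 \<le> E"
    using exp_lower_Taylor_quadratic[OF t0] t0 unfolding E_def by linarith
  have eq0: "(\<sigma> * u / 2)^2 = \<sigma>^2 * u^2 / 4" by (simp only: power_divide power_mult_distrib) simp
  have eq: "(\<sigma> * u / 2)^2 / 2 = (u^2 * \<sigma>^2) / 8" unfolding eq0 by (simp add: mult.commute)
  have k: "u^2 * \<sigma>^2 \<le> 8 * E" using t2 unfolding eq by linarith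
  have "u^2 * exp (- (\<sigma> * u / 2)) = u^2 / E" by (simp only: E_def exp_minus divide_inverse)
  also have "\<dots> \<le> 8 / \<sigma>^2"
  proof -
    have s2: "0 < \<sigma>^2" using s by simp
    have "u^2 \<le> 8 * E / \<sigma>^2" using k s2 by (simp add: le_divide_eq)
    hence "u^2 / E \<le> 8 * E / \<sigma>^2 / E" using E0 by (intro divide_right_mono) auto
    also have "\<dots> = 8 / \<sigma>^2" using E0 by simp
    finally show ?thesis .
  qed
  finally show ?thesis .
qed

lemma pt_bound:
  fixes z0 h :: complex and u :: real
  assumes u: "0 \<le> u" and s: "0 < Re z0" and h: "norm h \<le> Re z0 / 2"
  shows "norm (exp (- (z0 + h) * u) - exp (- z0 * u) + h * u * exp (- z0 * u)) \<le> norm h ^ 2 * (8 / (Re z0)^2)"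
proof -
  define w where "w = - h * u"
  have e1: "exp (- (z0 + h) * u) = exp (- z0 * u) * exp w"
    by (simp add: w_def mult_exp_exp algebra_simps)
  have e2: "exp (- (z0 + h) * u) - exp (- z0 * u) + h * u * exp (- z0 * u) = exp (- z0 * u) * (exp w - 1 - w)"
    unfolding e1 by (simp add: w_def algebra_simps)
  have nw: "norm w = norm h * u" using u by (simp add: w_def norm_mult)
  have ne: "norm (exp (- z0 * u)) = exp (- (Re z0 * u))" by (simp add: norm_exp_eq_Re)
  have "norm (exp (- z0 * u) * (exp w - 1 - w)) = exp (- (Re z0 * u)) * norm (exp w - 1 - w)"
    by (simp add: norm_mult ne)
  also have "\<dots> \<le> exp (- (Re z0 * u)) * ((norm h * u)^2 * exp (norm h * u))"
    using exp_rem_bound[of w] nw by (intro mult_left_mono) auto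
  also have "\<dots> = norm h ^ 2 * (u^2 * (exp (- (Re z0 * u)) * exp (norm h * u)))"
    by (simp add: power_mult_distrib mult_ac)
  also have "exp (- (Re z0 * u)) * exp (norm h * u) = exp (norm h * u - Re z0 * u)"
    by (simp add: mult_exp_exp)
  also have "\<dots> \<le> exp (- (Re z0 * u / 2))"
  proof -
    have "norm h * u \<le> Re z0 / 2 * u" using h u by (intro mult_right_mono) auto
    thus ?thesis by simp
  qed
  hence "norm h ^ 2 * (u^2 * exp (norm h * u - Re z0 * u)) \<le> norm h ^ 2 * (u^2 * exp (- (Re z0 * u / 2)))"
    by (intro mult_left_mono) auto
  also have "\<dots> \<le> norm h ^ 2 * (8 / (Re z0)^2)"
    using u2_exp_bound[OF u s] by (intro mult_left_mono) auto
  finally show ?thesis unfolding e2 .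
qed


lemma u_exp_bound:
  fixes u \<sigma> :: real
  assumes u: "0 \<le> u" and s: "0 < \<sigma>"
  shows "u * exp (- (\<sigma> * u)) \<le> 1 / \<sigma>"
proof -
  define E where "E = exp (\<sigma> * u)"
  have E0: "0 < E" by (simp add: E_def)
  have "1 + \<sigma> * u \<le> E" unfolding E_def by (rule exp_ge_add_one_self)
  hence k: "u * \<sigma> \<le> E" by (simp add: mult.commute)
  have "u * exp (- (\<sigma> * u)) = u / E" by (simp only: E_def exp_minus divide_inverse)
  also have "\<dots> \<le> 1 / \<sigma>"
  proof -
    have "u \<le> E / \<sigma>" using k s by (simp add: le_divide_eq)
    hence "u / E \<le> E / \<sigma> / E" using E0 by (intro divide_right_mono) auto
    also have "\<dots> = 1 / \<sigma>" using E0 by simp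
    finally show ?thesis .
  qed
  finally show ?thesis .
qed

lemma norm_exp_mult_real: "norm (exp (- z * complex_of_real u)) = exp (- (Re z * u))"
  by (simp add: norm_exp_eq_Re)

lemma laplace_holo:
  fixes M :: "'a measure" and u v :: "'a \<Rightarrow> real"
  assumes fin: "finite_measure M" and um: "u \<in> borel_measurable M" and vm: "v \<in> borel_measurable M"
    and u0: "AE x in M. 0 \<le> u x" and v01: "AE x in M. 0 \<le> v x \<and> v x \<le> 1"
  shows "(\<lambda>z. \<integral>x. complex_of_real (v x) * exp (- z * complex_of_real (u x)) \<partial>M) holomorphic_on {z. 0 < Re z}"
proof -
  interpret finite_measure M by (rule fin)
  note [measurable] = um vm
  define F where "F z = (\<integral>x. complex_of_real (v x) * exp (- z * complex_of_real (u x)) \<partial>M)" for z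
  define \<mu> where "\<mu> = measure M (space M)"
  have \<mu>0: "0 \<le> \<mu>" by (simp add: \<mu>_def)
  have intF: "integrable M (\<lambda>x. complex_of_real (v x) * exp (- z * complex_of_real (u x)))" if z: "0 \<le> Re z" for z
  proof (rule integrable_const_bound[where B = 1])
    show "AE x in M. norm (complex_of_real (v x) * exp (- z * complex_of_real (u x))) \<le> 1"
      using u0 v01
    proof eventually_elim
      case (elim x)
      have "exp (- (Re z * u x)) \<le> 1" using z elim by simp
      moreover have "\<bar>v x\<bar> \<le> 1" using elim by simp
      ultimately show ?case using elim by (simp add: norm_mult norm_exp_mult_real mult_le_one)
    qed
  qed measurable
  have holo_at: "\<exists>G. (F has_field_derivative G) (at z0)" if z0: "0 < Re z0" for z0
  proof -
    define \<sigma> where "\<sigma> = Re z0"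
    have \<sigma>: "0 < \<sigma>" using z0 by (simp add: \<sigma>_def)
    define g where "g x = complex_of_real (v x) * (- complex_of_real (u x)) * exp (- z0 * complex_of_real (u x))" for x
    have intg: "integrable M g"
    proof (rule integrable_const_bound[where B = "1 / \<sigma>"])
      show "AE x in M. norm (g x) \<le> 1 / \<sigma>"
        using u0 v01
      proof eventually_elim
        case (elim x)
        have "norm (g x) = \<bar>v x\<bar> * (u x * exp (- (\<sigma> * u x)))"
          using elim by (simp add: g_def norm_mult norm_exp_mult_real \<sigma>_def)
        also have "\<dots> \<le> 1 * (1 / \<sigma>)"
          using elim u_exp_bound[of "u x" \<sigma>] \<sigma> by (intro mult_mono) auto
        finally show ?case by simp
      qed
    qed (unfold g_def, measurable)
    define G where "G = integral\<^sup>L M g"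
    define K where "K = \<mu> * (8 / \<sigma>^2)"
    have key: "norm ((F y - F z0) / (y - z0) - G) \<le> K * norm (y - z0)"
      if y: "y \<noteq> z0" "dist y z0 < \<sigma> / 2" for y
    proof -
      define h where "h = y - z0"
      have h0: "h \<noteq> 0" using y by (simp add: h_def)
      have hs: "norm h \<le> Re z0 / 2" using y by (simp add: h_def dist_norm \<sigma>_def)
      have yz: "y = z0 + h" by (simp add: h_def)
      have Rey: "0 \<le> Re y"
      proof -
        have "\<bar>Re h\<bar> \<le> norm h" by (rule abs_Re_le_cmod)
        thus ?thesis using hs z0 yz by simp
      qed
      define R where "R x = complex_of_real (v x) * (exp (- (z0 + h) * complex_of_real (u x)) - exp (- z0 * complex_of_real (u x)) + h * complex_of_real (u x) * exp (- z0 * complex_of_real (u x)))" for x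
      have eqR: "F y - F z0 - h * G = integral\<^sup>L M R"
      proof -
        have "F y - F z0 - h * G = (\<integral>x. complex_of_real (v x) * exp (- y * complex_of_real (u x)) - complex_of_real (v x) * exp (- z0 * complex_of_real (u x)) - h * g x \<partial>M)"
          using intF[OF Rey] intF[of z0] z0 intg
          by (simp add: F_def G_def integral_diff)
        also have "\<dots> = integral\<^sup>L M R"
          by (rule Bochner_Integration.integral_cong) (auto simp: R_def g_def yz algebra_simps)
        finally show ?thesis .
      qed
      have Rb: "AE x in M. norm (R x) \<le> norm h ^ 2 * (8 / \<sigma>^2)"
        using u0 v01
      proof eventually_elim
        case (elim x)
        have "norm (R x) = \<bar>v x\<bar> * norm (exp (- (z0 + h) * complex_of_real (u x)) - exp (- z0 * complex_of_real (u x)) + h * complex_of_real (u x) * exp (- z0 * complex_of_real (u x)))"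
          by (simp add: R_def norm_mult)
        also have "\<dots> \<le> 1 * (norm h ^ 2 * (8 / \<sigma>^2))"
          using elim pt_bound[of "u x" z0 h] z0 hs by (intro mult_mono) (auto simp: \<sigma>_def)
        finally show ?case by simp
      qed
      have intR: "integrable M R"
        by (rule integrable_const_bound[OF Rb]) (unfold R_def, measurable)
      have "norm (integral\<^sup>L M R) \<le> (\<integral>x. norm (R x) \<partial>M)" by (rule integral_norm_bound)
      also have "\<dots> \<le> (\<integral>x. norm h ^ 2 * (8 / \<sigma>^2) \<partial>M)"
        using Rb intR by (intro integral_mono_AE) auto
      also have "\<dots> = K * norm h ^ 2" by (simp add: K_def \<mu>_def mult_ac)
      finally have nR: "norm (integral\<^sup>L M R) \<le> K * norm h ^ 2" .
      have "(F y - F z0) / (y - z0) - G = (F y - F z0 - h * G) / h"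
        using h0 by (simp add: h_def field_simps)
      hence "norm ((F y - F z0) / (y - z0) - G) = norm (integral\<^sup>L M R) / norm h"
        by (simp add: eqR norm_divide)
      also have "\<dots> \<le> K * norm h ^ 2 / norm h" using nR by (intro divide_right_mono) auto
      also have "\<dots> = K * norm h" using h0 by (simp add: power2_eq_square)
      finally show ?thesis by (simp add: h_def)
    qed
    have "((\<lambda>y. (F y - F z0) / (y - z0) - G) \<longlongrightarrow> 0) (at z0)"
    proof (rule Lim_null_comparison)
      show "\<forall>\<^sub>F y in at z0. norm ((F y - F z0) / (y - z0) - G) \<le> K * norm (y - z0)"
        unfolding eventually_at using \<sigma> key by (intro exI[of _ "\<sigma> / 2"]) auto
      have "((\<lambda>y. K * norm (y - z0)) \<longlongrightarrow> K * norm (z0 - z0)) (at z0)"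
        by (intro tendsto_intros)
      thus "((\<lambda>y. K * norm (y - z0)) \<longlongrightarrow> 0) (at z0)" by simp
    qed
    hence "(F has_field_derivative G) (at z0)"
      by (simp add: has_field_derivative_iff LIM_zero_iff)
    thus ?thesis by blast
  qed
  show ?thesis
    unfolding F_def[symmetric] holomorphic_on_def field_differentiable_def
    using holo_at by (auto intro: has_field_derivative_at_within)
qed



lemma laplace_bound:
  fixes M :: "'a measure" and u v :: "'a \<Rightarrow> real"
  assumes fin: "finite_measure M" and um: "u \<in> borel_measurable M" and vm: "v \<in> borel_measurable M"
    and u0: "AE x in M. 0 \<le> u x" and v01: "AE x in M. 0 \<le> v x \<and> v x \<le> 1"
    and z: "0 \<le> Re z"
  shows "norm (\<integral>x. complex_of_real (v x) * exp (- z * complex_of_real (u x)) \<partial>M) \<le> measure M (space M)"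
proof -
  interpret finite_measure M by (rule fin)
  note [measurable] = um vm
  have b: "AE x in M. norm (complex_of_real (v x) * exp (- z * complex_of_real (u x))) \<le> 1"
    using u0 v01
  proof eventually_elim
    case (elim x)
    have "exp (- (Re z * u x)) \<le> 1" using z elim by simp
    moreover have "\<bar>v x\<bar> \<le> 1" using elim by simp
    ultimately show ?case using elim by (simp add: norm_mult norm_exp_mult_real mult_le_one)
  qed
  have int: "integrable M (\<lambda>x. complex_of_real (v x) * exp (- z * complex_of_real (u x)))"
    by (rule integrable_const_bound[OF b]) measurable
  have "norm (\<integral>x. complex_of_real (v x) * exp (- z * complex_of_real (u x)) \<partial>M)
      \<le> (\<integral>x. norm (complex_of_real (v x) * exp (- z * complex_of_real (u x))) \<partial>M)"
    by (rule integral_norm_bound)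
  also have "\<dots> \<le> (\<integral>x. 1 \<partial>M)"
    using b int by (intro integral_mono_AE) auto
  also have "\<dots> = measure M (space M)" by simp
  finally show ?thesis .
qed

lemma meas_borel:
  assumes "sets M = sets borel" "f \<in> borel_measurable borel"
  shows "f \<in> borel_measurable M"
  using assms measurable_cong_sets[of M borel borel borel] by simp

lemma F_real:
  fixes M :: "(real ^ 'n::finite) measure" and s :: "real ^ 'n" and k :: 'n and a :: real
  shows "(\<integral>x. complex_of_real (exp (- (\<Sum>i\<in>UNIV - {k}. s $ i * x $ i))) * exp (- complex_of_real a * complex_of_real (x $ k)) \<partial>M)
       = complex_of_real (laplace_stieltjes M (\<chi> i. if i = k then a else s $ i))"
proof -
  have pt: "complex_of_real (exp (- (\<Sum>i\<in>UNIV. (\<chi> i. if i = k then a else s $ i) $ i * x $ i)))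
      = complex_of_real (exp (- (\<Sum>i\<in>UNIV - {k}. s $ i * x $ i))) * exp (- complex_of_real a * complex_of_real (x $ k))" for x :: "real ^ 'n"
  proof -
    define B where "B = (\<Sum>i\<in>UNIV - {k}. s $ i * x $ i)"
    have "(\<Sum>i\<in>UNIV. (\<chi> i. if i = k then a else s $ i) $ i * x $ i) = a * x $ k + (\<Sum>i\<in>UNIV - {k}. (\<chi> i. if i = k then a else s $ i) $ i * x $ i)"
      by (subst sum.remove[of UNIV k]) auto
    also have "(\<Sum>i\<in>UNIV - {k}. (\<chi> i. if i = k then a else s $ i) $ i * x $ i) = B"
      unfolding B_def by (intro sum.cong) auto
    finally have e: "(\<Sum>i\<in>UNIV. (\<chi> i. if i = k then a else s $ i) $ i * x $ i) = a * x $ k + B" .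
    have "exp (- (a * x $ k + B)) = exp (- B) * exp (- (a * x $ k))" by (simp add: mult_exp_exp)
    hence "complex_of_real (exp (- (a * x $ k + B))) = complex_of_real (exp (- B)) * complex_of_real (exp (- (a * x $ k)))"
      by (metis of_real_mult)
    also have "complex_of_real (exp (- (a * x $ k))) = exp (- complex_of_real a * complex_of_real (x $ k))"
      by (metis exp_of_real of_real_minus of_real_mult mult_minus_left)
    finally show ?thesis unfolding e B_def .
  qed
  show ?thesis
    unfolding laplace_stieltjes_def integral_complex_of_real[symmetric] pt ..
qed


lemma laplace_all_pos:
  fixes m :: "'n::finite \<Rightarrow> nat \<Rightarrow> real"
    and M N :: "(real ^ 'n) measure"
  assumes pos: "\<And>i. 0 < m i 0"
    and incr: "\<And>i. strict_mono (m i)"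
    and diverge: "\<And>i. \<not> summable (\<lambda>j. 1 / m i j)"
    and M: "distribution_on_Rplus M"
    and N: "distribution_on_Rplus N"
    and agree: "\<And>j :: 'n \<Rightarrow> nat.
       laplace_stieltjes M (\<chi> i. m i (j i)) = laplace_stieltjes N (\<chi> i. m i (j i))"
  shows "\<And>s. (\<forall>i. 0 < s $ i) \<Longrightarrow> laplace_stieltjes M s = laplace_stieltjes N s"
proof -
  have Ms: "sets M = sets borel" and Mp: "prob_space M" and M0: "AE x in M. \<forall>i. 0 \<le> x $ i"
    using M by (auto simp: distribution_on_Rplus_def)
  have Ns: "sets N = sets borel" and Np: "prob_space N" and N0: "AE x in N. \<forall>i. 0 \<le> x $ i"
    using N by (auto simp: distribution_on_Rplus_def)
  have Mf: "finite_measure M" using Mp by (simp add: prob_space_def)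
  have Nf: "finite_measure N" using Np by (simp add: prob_space_def)
  have mpos: "0 < m i j" for i j using pos[of i] incr[of i] by (metis le0 order_less_le_trans strict_mono_less_eq)
  have P: "\<forall>s. (\<forall>i. 0 < s $ i) \<longrightarrow> (\<forall>i. i \<notin> S \<longrightarrow> s $ i \<in> range (m i)) \<longrightarrow> laplace_stieltjes M s = laplace_stieltjes N s"
    if "finite S" for S :: "'n set"
    using that
  proof (induction S rule: finite_induct)
    case empty
    show ?case
    proof (intro allI impI)
      fix s :: "real ^ 'n"
      assume "\<forall>i. i \<notin> {} \<longrightarrow> s $ i \<in> range (m i)"
      hence "\<forall>i. \<exists>j. s $ i = m i j" by auto
      then obtain j where j: "\<And>i. s $ i = m i (j i)" by metis
      have "s = (\<chi> i. m i (j i))" using j by (simp add: vec_eq_iff)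
      thus "laplace_stieltjes M s = laplace_stieltjes N s" using agree by simp
    qed
  next
    case (insert k S)
    show ?case
    proof (intro allI impI)
      fix s :: "real ^ 'n"
      assume spos: "\<forall>i. 0 < s $ i" and srange: "\<forall>i. i \<notin> insert k S \<longrightarrow> s $ i \<in> range (m i)"
      define v where "v x = exp (- (\<Sum>i\<in>UNIV - {k}. s $ i * x $ i))" for x :: "real ^ 'n"
      define u where "u x = x $ k" for x :: "real ^ 'n"
      define D where "D z = (\<integral>x. complex_of_real (v x) * exp (- z * complex_of_real (u x)) \<partial>M)
                         - (\<integral>x. complex_of_real (v x) * exp (- z * complex_of_real (u x)) \<partial>N)" for z
      have vb: "v \<in> borel_measurable borel"
        unfolding v_def by (intro borel_measurable_continuous_onI continuous_intros)
      have ub: "u \<in> borel_measurable borel"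
        unfolding u_def by (intro borel_measurable_continuous_onI continuous_intros)
      have v01: "0 \<le> v x \<and> v x \<le> 1" if "\<forall>i. 0 \<le> x $ i" for x :: "real ^ 'n"
      proof -
        have "0 \<le> (\<Sum>i\<in>UNIV - {k}. s $ i * x $ i)"
          using that spos by (intro sum_nonneg mult_nonneg_nonneg) (simp_all add: less_imp_le)
        thus ?thesis by (simp add: v_def)
      qed
      have uM: "AE x in M. 0 \<le> u x" using M0 by eventually_elim (simp add: u_def)
      have uN: "AE x in N. 0 \<le> u x" using N0 by eventually_elim (simp add: u_def)
      have vM: "AE x in M. 0 \<le> v x \<and> v x \<le> 1" using M0 by eventually_elim (rule v01)
      have vN: "AE x in N. 0 \<le> v x \<and> v x \<le> 1" using N0 by eventually_elim (rule v01)
      have hol: "D holomorphic_on {z. 0 < Re z}"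
        unfolding D_def
        by (intro holomorphic_on_diff laplace_holo Mf Nf meas_borel[OF Ms] meas_borel[OF Ns] vb ub uM uN vM vN)
      have bd: "norm (D z) \<le> 2" if "0 < Re z" for z
      proof -
        have "norm (D z) \<le> norm (\<integral>x. complex_of_real (v x) * exp (- z * complex_of_real (u x)) \<partial>M)
                         + norm (\<integral>x. complex_of_real (v x) * exp (- z * complex_of_real (u x)) \<partial>N)"
          unfolding D_def by (rule norm_triangle_ineq4)
        also have "\<dots> \<le> measure M (space M) + measure N (space N)"
          using that by (intro add_mono laplace_bound Mf Nf meas_borel[OF Ms] meas_borel[OF Ns] vb ub uM uN vM vN) auto
        also have "\<dots> = 2" using prob_space.prob_space[OF Mp] prob_space.prob_space[OF Np] by simp
        finally show ?thesis .
      qed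
      have Dreal: "D (complex_of_real a) = complex_of_real (laplace_stieltjes M (\<chi> i. if i = k then a else s $ i) - laplace_stieltjes N (\<chi> i. if i = k then a else s $ i))" for a
        unfolding D_def u_def v_def F_real by simp
      have zeros: "D (complex_of_real (m k j)) = 0" for j
      proof -
        let ?s = "(\<chi> i. if i = k then m k j else s $ i) :: real ^ 'n"
        have "\<forall>i. 0 < ?s $ i" using spos mpos by simp
        moreover have "\<forall>i. i \<notin> S \<longrightarrow> ?s $ i \<in> range (m i)"
          using srange by auto
        ultimately have "laplace_stieltjes M ?s = laplace_stieltjes N ?s" using insert.IH by blast
        thus ?thesis by (simp add: Dreal)
      qed
      have "D (complex_of_real (s $ k)) = 0"
        using halfplane_unique[OF incr[of k] pos[of k] diverge[of k] hol bd zeros] spos by blast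
      moreover have "(\<chi> i. if i = k then s $ k else s $ i) = s" by (simp add: vec_eq_iff)
      ultimately show "laplace_stieltjes M s = laplace_stieltjes N s" by (simp add: Dreal)
    qed
  qed
  fix s :: "real ^ 'n"
  assume "\<forall>i. 0 < s $ i"
  thus "laplace_stieltjes M s = laplace_stieltjes N s" using P[of UNIV] by simp
qed



definition cube :: "(real ^ 'n::finite) set" where
  "cube = cbox (\<chi> i. 0) (\<chi> i. 1)"

definition Tp :: "real ^ 'n::finite \<Rightarrow> real ^ 'n" where
  "Tp x = (\<chi> i. exp (- max 0 (x $ i)))"

definition Wt :: "real ^ 'n::finite \<Rightarrow> real" where
  "Wt y = (\<Prod>i\<in>UNIV. y $ i)"

definition mnm :: "('n::finite \<Rightarrow> nat) \<Rightarrow> real ^ 'n \<Rightarrow> real" where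
  "mnm k y = (\<Prod>i\<in>UNIV. y $ i ^ k i)"

definition Q0 :: "(real ^ 'n::finite) measure \<Rightarrow> (real ^ 'n \<Rightarrow> real) \<Rightarrow> real" where
  "Q0 \<mu> g = (\<integral>x. g (Tp x) * Wt (Tp x) \<partial>\<mu>)"

lemma mem_cube: "y \<in> cube \<longleftrightarrow> (\<forall>i. 0 \<le> y $ i \<and> y $ i \<le> 1)"
  by (simp add: cube_def mem_box_cart)

lemma compact_cube: "compact cube"
  by (simp add: cube_def)

lemma Tp_cube: "Tp x \<in> cube"
  by (simp add: mem_cube Tp_def)

lemma cont_Tp: "continuous_on UNIV Tp"
  unfolding Tp_def by (intro continuous_on_vec_lambda continuous_intros)

lemma cont_Wt: "continuous_on S Wt"
  unfolding Wt_def by (intro continuous_intros)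

lemma cont_mnm: "continuous_on S (mnm k)"
  unfolding mnm_def by (intro continuous_intros)

lemma Wt_cube: "y \<in> cube \<Longrightarrow> 0 \<le> Wt y \<and> Wt y \<le> 1"
  unfolding Wt_def mem_cube by (auto intro: prod_nonneg prod_le_1)

lemma Wt_Tp_pos: "0 < Wt (Tp x)"
  unfolding Wt_def Tp_def by (intro prod_pos) auto

lemma comp_cont:
  assumes "continuous_on cube g"
  shows "continuous_on UNIV (\<lambda>x. g (Tp x))"
  using continuous_on_compose2[OF assms cont_Tp] Tp_cube by auto

lemma comp_meas:
  fixes g :: "real ^ 'n::finite \<Rightarrow> real"
  assumes "continuous_on cube g" "sets \<mu> = sets borel"
  shows "(\<lambda>x. g (Tp x)) \<in> borel_measurable \<mu>"
  by (intro meas_borel[OF assms(2)] borel_measurable_continuous_onI comp_cont assms(1))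

lemma comp_int:
  fixes g :: "real ^ 'n::finite \<Rightarrow> real"
  assumes g: "continuous_on cube g" and s: "sets \<mu> = sets borel" and f: "finite_measure \<mu>"
  shows "integrable \<mu> (\<lambda>x. g (Tp x))"
proof -
  have "compact (g ` cube)" by (intro compact_continuous_image g compact_cube)
  then obtain B where B: "\<And>y. y \<in> cube \<Longrightarrow> norm (g y) \<le> B"
    using compact_imp_bounded bounded_iff by (metis image_eqI)
  show ?thesis
    by (rule finite_measure.integrable_const_bound[OF f, where B = B])
       (use B Tp_cube comp_meas[OF g s] in auto)
qed

lemma cont_prodW:
  assumes "continuous_on cube g"
  shows "continuous_on cube (\<lambda>y. g y * Wt y)"
  using assms cont_Wt by (intro continuous_intros)

lemma Q0_mnm:
  fixes \<mu> :: "(real ^ 'n::finite) measure"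
  assumes s: "sets \<mu> = sets borel" and pos: "AE x in \<mu>. \<forall>i. 0 \<le> x $ i"
  shows "Q0 \<mu> (mnm k) = laplace_stieltjes \<mu> (\<chi> i. real (k i) + 1)"
proof -
  have pt: "mnm k (Tp x) * Wt (Tp x) = exp (- (\<Sum>i\<in>UNIV. (\<chi> i. real (k i) + 1) $ i * x $ i))"
    if x: "\<forall>i. 0 \<le> x $ i" for x :: "real ^ 'n"
  proof -
    have Tx: "Tp x $ i = exp (- (x $ i))" for i using x by (simp add: Tp_def)
    have "mnm k (Tp x) * Wt (Tp x) = (\<Prod>i\<in>UNIV. exp (- (x $ i)) ^ k i * exp (- (x $ i)))"
      by (simp add: mnm_def Wt_def Tx prod.distrib)
    also have "\<dots> = (\<Prod>i\<in>UNIV. exp (- ((real (k i) + 1) * x $ i)))"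
    proof (intro prod.cong refl)
      fix i
      have "exp (- (x $ i)) ^ k i * exp (- (x $ i)) = exp (- (x $ i)) ^ Suc (k i)" by simp
      also have "\<dots> = exp (real (Suc (k i)) * - (x $ i))" by (rule exp_of_nat_mult[symmetric])
      also have "\<dots> = exp (- ((real (k i) + 1) * x $ i))" by (simp add: algebra_simps)
      finally show "exp (- (x $ i)) ^ k i * exp (- (x $ i)) = exp (- ((real (k i) + 1) * x $ i))" .
    qed
    also have "\<dots> = exp (- (\<Sum>i\<in>UNIV. (\<chi> i. real (k i) + 1) $ i * x $ i))"
      by (simp add: exp_sum[symmetric] sum_negf)
    finally show ?thesis .
  qed
  have m1: "(\<lambda>x. mnm k (Tp x) * Wt (Tp x)) \<in> borel_measurable \<mu>"
    by (intro comp_meas[OF _ s] cont_prodW cont_mnm)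
  have m2: "(\<lambda>x. exp (- (\<Sum>i\<in>UNIV. (\<chi> i. real (k i) + 1) $ i * x $ i))) \<in> borel_measurable \<mu>"
    by (intro meas_borel[OF s] borel_measurable_continuous_onI continuous_intros)
  show ?thesis
    unfolding Q0_def laplace_stieltjes_def
    by (rule integral_cong_AE[OF m1 m2]) (use pos pt in auto)
qed


lemma Q0_int:
  fixes g :: "real ^ 'n::finite \<Rightarrow> real"
  assumes g: "continuous_on cube g" and s: "sets \<mu> = sets borel" and f: "finite_measure \<mu>"
  shows "integrable \<mu> (\<lambda>x. g (Tp x) * Wt (Tp x))"
  using comp_int[OF cont_prodW[OF g] s f] .

lemma Q0_add:
  fixes a b :: "real ^ 'n::finite \<Rightarrow> real"
  assumes a: "continuous_on cube a" and b: "continuous_on cube b" and s: "sets \<mu> = sets borel" and f: "finite_measure \<mu>"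
  shows "Q0 \<mu> (\<lambda>y. a y + b y) = Q0 \<mu> a + Q0 \<mu> b"
  unfolding Q0_def distrib_right
  by (rule Bochner_Integration.integral_add[OF Q0_int[OF a s f] Q0_int[OF b s f]])

lemma Q0_diff:
  fixes a b :: "real ^ 'n::finite \<Rightarrow> real"
  assumes a: "continuous_on cube a" and b: "continuous_on cube b" and s: "sets \<mu> = sets borel" and f: "finite_measure \<mu>"
  shows "Q0 \<mu> (\<lambda>y. a y - b y) = Q0 \<mu> a - Q0 \<mu> b"
  unfolding Q0_def left_diff_distrib
  by (rule Bochner_Integration.integral_diff[OF Q0_int[OF a s f] Q0_int[OF b s f]])

lemma Q0_cmult:
  "Q0 \<mu> (\<lambda>y. c * a y) = c * Q0 \<mu> a"
proof -
  have "Q0 \<mu> (\<lambda>y. c * a y) = (\<integral>x. c * (a (Tp x) * Wt (Tp x)) \<partial>\<mu>)"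
    unfolding Q0_def by (simp only: mult.assoc)
  also have "\<dots> = c * Q0 \<mu> a" unfolding Q0_def by (rule integral_mult_right_zero)
  finally show ?thesis .
qed

lemma Q0_small:
  fixes h :: "real ^ 'n::finite \<Rightarrow> real"
  assumes h: "continuous_on cube h" and s: "sets \<mu> = sets borel" and p: "prob_space \<mu>"
    and e: "\<And>y. y \<in> cube \<Longrightarrow> \<bar>h y\<bar> \<le> e"
  shows "\<bar>Q0 \<mu> h\<bar> \<le> e"
proof -
  have f: "finite_measure \<mu>" using p by (simp add: prob_space_def)
  have pt: "\<bar>h (Tp x) * Wt (Tp x)\<bar> \<le> e" for x
  proof -
    have "\<bar>h (Tp x) * Wt (Tp x)\<bar> = \<bar>h (Tp x)\<bar> * Wt (Tp x)" using Wt_cube[OF Tp_cube[of x]] by (simp add: abs_mult)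
    also have "\<dots> \<le> \<bar>h (Tp x)\<bar>" using Wt_cube[OF Tp_cube[of x]] mult_left_le[of "Wt (Tp x)" "\<bar>h (Tp x)\<bar>"] by simp
    also have "\<dots> \<le> e" using e[OF Tp_cube] .
    finally show ?thesis .
  qed
  have "\<bar>Q0 \<mu> h\<bar> \<le> (\<integral>x. \<bar>h (Tp x) * Wt (Tp x)\<bar> \<partial>\<mu>)" unfolding Q0_def by (rule integral_abs_bound)
  also have "\<dots> \<le> (\<integral>x. e \<partial>\<mu>)"
    using pt Q0_int[OF h s f] finite_measure.integrable_const[OF f] by (intro integral_mono) auto
  also have "\<dots> = e" using prob_space.prob_space[OF p] by simp
  finally show ?thesis .
qed

lemma mnm_Suc: "y $ i * mnm k y = mnm (k(i := Suc (k i))) y"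
proof -
  define P where "P = (\<Prod>j\<in>UNIV - {i}. y $ j ^ k j)"
  have "mnm (k(i := Suc (k i))) y = y $ i ^ Suc (k i) * (\<Prod>j\<in>UNIV - {i}. y $ j ^ (k(i := Suc (k i))) j)"
    unfolding mnm_def by (subst prod.remove[of UNIV i]) auto
  also have "(\<Prod>j\<in>UNIV - {i}. y $ j ^ (k(i := Suc (k i))) j) = P"
    unfolding P_def by (intro prod.cong) auto
  finally have A: "mnm (k(i := Suc (k i))) y = y $ i ^ Suc (k i) * P" .
  have B: "mnm k y = y $ i ^ k i * P"
    unfolding mnm_def P_def by (subst prod.remove[of UNIV i]) auto
  show ?thesis unfolding A B by (simp add: mult.assoc)
qed

lemma mnm_0: "mnm (\<lambda>_. 0) y = 1"
  by (simp add: mnm_def)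

lemma cont_equal:
  fixes M N :: "(real ^ 'n::finite) measure"
  assumes Ms: "sets M = sets borel" and Ns: "sets N = sets borel"
    and Mp: "prob_space M" and Np: "prob_space N"
    and mnm_eq: "\<And>k. Q0 M (mnm k) = Q0 N (mnm k)"
    and f: "continuous_on cube f"
  shows "Q0 M f = Q0 N f"
proof -
  have Mf: "finite_measure M" using Mp by (simp add: prob_space_def)
  have Nf: "finite_measure N" using Np by (simp add: prob_space_def)
  define Qh where "Qh h \<longleftrightarrow> continuous_on cube h \<and> (\<forall>k. Q0 M (\<lambda>y. h y * mnm k y) = Q0 N (\<lambda>y. h y * mnm k y))"
    for h :: "real ^ 'n \<Rightarrow> real"
  define Rf where "Rf g \<longleftrightarrow> continuous_on cube g \<and> (\<forall>h. Qh h \<longrightarrow> Qh (\<lambda>y. g y * h y))"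
    for g :: "real ^ 'n \<Rightarrow> real"
  have Qh1: "Qh (\<lambda>_. 1)" unfolding Qh_def using mnm_eq by simp
  have R_cont: "Rf g \<Longrightarrow> continuous_on cube g" for g by (simp add: Rf_def)
  have R_const: "Rf (\<lambda>_. c)" for c
    unfolding Rf_def
  proof (intro conjI allI impI)
    fix h assume h: "Qh h"
    show "Qh (\<lambda>y. c * h y)"
      unfolding Qh_def
    proof (intro conjI allI)
      show "continuous_on cube (\<lambda>y. c * h y)" using h by (intro continuous_intros) (simp add: Qh_def)
      fix k
      have e: "(\<lambda>y. c * h y * mnm k y) = (\<lambda>y. c * (h y * mnm k y))" by (simp add: mult.assoc)
      show "Q0 M (\<lambda>y. c * h y * mnm k y) = Q0 N (\<lambda>y. c * h y * mnm k y)"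
        unfolding e Q0_cmult using h by (simp add: Qh_def)
    qed
  qed simp
  have R_add: "Rf (\<lambda>y. a y + b y)" if a: "Rf a" and b: "Rf b" for a b
    unfolding Rf_def
  proof (intro conjI allI impI)
    show "continuous_on cube (\<lambda>y. a y + b y)" using a b by (intro continuous_intros) (simp_all add: Rf_def)
    fix h assume h: "Qh h"
    have ah: "Qh (\<lambda>y. a y * h y)" and bh: "Qh (\<lambda>y. b y * h y)" using a b h by (simp_all add: Rf_def)
    show "Qh (\<lambda>y. (a y + b y) * h y)"
      unfolding Qh_def
    proof (intro conjI allI)
      show "continuous_on cube (\<lambda>y. (a y + b y) * h y)" using a b h by (intro continuous_intros) (simp_all add: Rf_def Qh_def)
      fix k
      have e: "(\<lambda>y. (a y + b y) * h y * mnm k y) = (\<lambda>y. a y * h y * mnm k y + b y * h y * mnm k y)"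
        by (simp add: algebra_simps)
      have ca: "continuous_on cube (\<lambda>y. a y * h y * mnm k y)"
        using a h cont_mnm by (intro continuous_intros) (simp_all add: Rf_def Qh_def)
      have cb: "continuous_on cube (\<lambda>y. b y * h y * mnm k y)"
        using b h cont_mnm by (intro continuous_intros) (simp_all add: Rf_def Qh_def)
      show "Q0 M (\<lambda>y. (a y + b y) * h y * mnm k y) = Q0 N (\<lambda>y. (a y + b y) * h y * mnm k y)"
        unfolding e Q0_add[OF ca cb Ms Mf] Q0_add[OF ca cb Ns Nf] using ah bh by (simp add: Qh_def)
    qed
  qed
  have R_mult: "Rf (\<lambda>y. a y * b y)" if a: "Rf a" and b: "Rf b" for a b
    unfolding Rf_def
  proof (intro conjI allI impI)
    show "continuous_on cube (\<lambda>y. a y * b y)" using a b by (intro continuous_intros) (simp_all add: Rf_def)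
    fix h assume h: "Qh h"
    have "Qh (\<lambda>y. b y * h y)" using b h by (simp add: Rf_def)
    hence "Qh (\<lambda>y. a y * (b y * h y))" using a by (simp add: Rf_def)
    thus "Qh (\<lambda>y. a y * b y * h y)" by (simp add: mult.assoc)
  qed
  have R_coord: "Rf (\<lambda>y. y $ i)" for i
    unfolding Rf_def
  proof (intro conjI allI impI)
    show "continuous_on cube (\<lambda>y. y $ i)" by (intro continuous_intros)
    fix h assume h: "Qh h"
    show "Qh (\<lambda>y. y $ i * h y)"
      unfolding Qh_def
    proof (intro conjI allI)
      show "continuous_on cube (\<lambda>y. y $ i * h y)" using h by (intro continuous_intros) (simp_all add: Qh_def)
      fix k
      have e: "(\<lambda>y. y $ i * h y * mnm k y) = (\<lambda>y. h y * mnm (k(i := Suc (k i))) y)"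
        by (simp add: mnm_Suc[symmetric] mult_ac)
      show "Q0 M (\<lambda>y. y $ i * h y * mnm k y) = Q0 N (\<lambda>y. y $ i * h y * mnm k y)"
        unfolding e using h by (simp add: Qh_def)
    qed
  qed
  have R_eq: "Q0 M g = Q0 N g" if g: "Rf g" for g
  proof -
    have "Qh (\<lambda>y. g y * 1)" using g Qh1 unfolding Rf_def by blast
    hence "Q0 M (\<lambda>y. g y * 1 * mnm (\<lambda>_. 0) y) = Q0 N (\<lambda>y. g y * 1 * mnm (\<lambda>_. 0) y)"
      by (simp only: Qh_def)
    thus ?thesis by (simp add: mnm_0)
  qed
  have close: "\<bar>Q0 M f - Q0 N f\<bar> \<le> 2 * e" if e: "0 < e" for e
  proof -
    obtain g where g: "Rf g" and ge: "\<forall>y\<in>cube. \<bar>f y - g y\<bar> < e"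
      using Stone_Weierstrass_HOL[of cube Rf f e, OF compact_cube R_const R_cont _ _ _ f e]
        R_add R_mult
    proof -
      have sep: "\<exists>h. Rf h \<and> h x \<noteq> h y" if xy: "x \<in> cube \<and> y \<in> cube \<and> x \<noteq> y" for x y
      proof -
        obtain i where "x $ i \<noteq> y $ i" using xy by (metis vec_eq_iff)
        thus ?thesis using R_coord by blast
      qed
      show ?thesis
        using Stone_Weierstrass_HOL[of cube Rf f e, OF compact_cube R_const R_cont _ _ sep f e]
          R_add R_mult that by blast
    qed
    have cg: "continuous_on cube g" using g by (simp add: Rf_def)
    have b: "\<And>y. y \<in> cube \<Longrightarrow> \<bar>f y - g y\<bar> \<le> e" using ge by (simp add: less_imp_le)
    have cd: "continuous_on cube (\<lambda>y. f y - g y)" using f cg by (intro continuous_intros)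
    have "\<bar>Q0 M f - Q0 M g\<bar> \<le> e"
      using Q0_small[OF cd Ms Mp b] Q0_diff[OF f cg Ms Mf] by simp
    moreover have "\<bar>Q0 N f - Q0 N g\<bar> \<le> e"
      using Q0_small[OF cd Ns Np b] Q0_diff[OF f cg Ns Nf] by simp
    moreover have "Q0 M g = Q0 N g" by (rule R_eq[OF g])
    ultimately show ?thesis by linarith
  qed
  have "\<bar>Q0 M f - Q0 N f\<bar> \<le> 0"
  proof (rule field_le_epsilon)
    fix e :: real assume e: "0 < e"
    show "\<bar>Q0 M f - Q0 N f\<bar> \<le> 0 + e" using close[of "e / 2"] e by simp
  qed
  thus ?thesis by simp
qed


lemma Tp_inj:
  fixes x x' :: "real ^ 'n::finite"
  assumes x: "\<forall>i. 0 \<le> x $ i" and x': "\<forall>i. 0 \<le> x' $ i" and e: "Tp x = Tp x'"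
  shows "x = x'"
proof -
  have "x $ i = x' $ i" for i
  proof -
    have "exp (- max 0 (x $ i)) = exp (- max 0 (x' $ i))" using e by (metis Tp_def vec_lambda_beta)
    hence "max 0 (x $ i) = max 0 (x' $ i)" by simp
    thus ?thesis using x x' by simp
  qed
  thus ?thesis by (simp add: vec_eq_iff)
qed

lemma lim_ind:
  fixes \<mu> :: "(real ^ 'n::finite) measure"
  assumes s: "sets \<mu> = sets borel" and p: "prob_space \<mu>" and pos: "AE x in \<mu>. \<forall>i. 0 \<le> x $ i"
    and K: "compact (K :: (real ^ 'n) set)" and KO: "\<And>x :: real ^ 'n. x \<in> K \<Longrightarrow> \<forall>i. 0 \<le> x $ i" and Kne: "K \<noteq> {}"
  shows "(\<lambda>j. Q0 \<mu> (\<lambda>y. max 0 (1 - real j * infdist y (Tp ` K)))) \<longlonglongrightarrow> (\<integral>x. indicator K x * Wt (Tp x) \<partial>\<mu>)"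
proof -
  have f: "finite_measure \<mu>" using p by (simp add: prob_space_def)
  define TK where "TK = Tp ` K"
  have cTK: "compact TK" unfolding TK_def
    by (intro compact_continuous_image K continuous_on_subset[OF cont_Tp]) auto
  hence clTK: "closed TK" by (rule compact_imp_closed)
  have TKne: "TK \<noteq> {}" using Kne by (simp add: TK_def)
  define fj where "fj j y = max 0 (1 - real j * infdist y TK)" for j :: nat and y :: "real ^ 'n"
  have cfj: "continuous_on cube (fj j)" for j
    unfolding fj_def by (intro continuous_intros continuous_on_infdist)
  have fj01: "0 \<le> fj j y \<and> fj j y \<le> 1" for j y
    using infdist_nonneg[of y TK] by (simp add: fj_def)
  have Ks: "K \<in> sets \<mu>" using s K by (simp add: compact_imp_closed borel_closed)
  have Wm: "(\<lambda>x. Wt (Tp x)) \<in> borel_measurable \<mu>" by (rule comp_meas[OF cont_Wt s])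
  have m1: "(\<lambda>x. indicator K x * Wt (Tp x)) \<in> borel_measurable \<mu>"
    using Ks Wm by measurable
  have m2: "(\<lambda>x. fj j (Tp x) * Wt (Tp x)) \<in> borel_measurable \<mu>" for j
    by (rule comp_meas[OF cont_prodW[OF cfj] s])
  have conv: "AE x in \<mu>. (\<lambda>j. fj j (Tp x) * Wt (Tp x)) \<longlonglongrightarrow> indicator K x * Wt (Tp x)"
    using pos
  proof eventually_elim
    case (elim x)
    show ?case
    proof (cases "x \<in> K")
      case True
      hence "Tp x \<in> TK" by (simp add: TK_def)
      hence "infdist (Tp x) TK = 0" by (rule infdist_zero)
      hence eq: "\<And>j. fj j (Tp x) * Wt (Tp x) = indicator K x * Wt (Tp x)" using True by (simp add: fj_def)
      show ?thesis by (simp only: eq) (rule tendsto_const)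
    next
      case False
      have "Tp x \<notin> TK"
      proof
        assume "Tp x \<in> TK"
        then obtain x' where x': "x' \<in> K" "Tp x = Tp x'" by (auto simp: TK_def)
        hence "x = x'" using Tp_inj[OF elim KO[OF x'(1)]] by simp
        thus False using False x' by simp
      qed
      hence d: "0 < infdist (Tp x) TK"
        using in_closed_iff_infdist_zero[OF clTK TKne, of "Tp x"] infdist_nonneg[of "Tp x" TK] by linarith
      define d where "d = infdist (Tp x) TK"
      have "\<forall>\<^sub>F j in sequentially. fj j (Tp x) * Wt (Tp x) = indicator K x * Wt (Tp x)"
      proof (rule eventually_sequentiallyI[of "nat \<lceil>1 / d\<rceil>"])
        fix j assume j: "nat \<lceil>1 / d\<rceil> \<le> j"
        have "1 / d \<le> real j" using j by linarith
        hence "1 \<le> real j * d" using d by (simp add: d_def field_simps)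
        hence "fj j (Tp x) = 0" by (simp add: fj_def d_def)
        thus "fj j (Tp x) * Wt (Tp x) = indicator K x * Wt (Tp x)" using False by simp
      qed
      thus ?thesis by (rule tendsto_eventually)
    qed
  qed
  have bnd: "AE x in \<mu>. norm (fj j (Tp x) * Wt (Tp x)) \<le> 1" for j
  proof (rule AE_I2)
    fix x
    have "\<bar>fj j (Tp x) * Wt (Tp x)\<bar> = fj j (Tp x) * Wt (Tp x)" using fj01[of j "Tp x"] Wt_cube[OF Tp_cube[of x]] by simp
    also have "\<dots> \<le> 1 * 1" using fj01[of j "Tp x"] Wt_cube[OF Tp_cube[of x]] by (intro mult_mono) auto
    finally show "norm (fj j (Tp x) * Wt (Tp x)) \<le> 1" by simp
  qed
  have "(\<lambda>j. \<integral>x. fj j (Tp x) * Wt (Tp x) \<partial>\<mu>) \<longlonglongrightarrow> (\<integral>x. indicator K x * Wt (Tp x) \<partial>\<mu>)"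
    by (rule integral_dominated_convergence[OF m1 m2 finite_measure.integrable_const[OF f] conv bnd])
  thus ?thesis unfolding Q0_def fj_def TK_def .
qed


lemma sets_borel_compact: "sets (borel :: (real ^ 'n::finite) measure) = sigma_sets UNIV (Collect compact)"
proof -
  have "sets (borel :: (real ^ 'n) measure) = sigma_sets UNIV (Collect closed)"
    by (subst borel_eq_closed) (simp add: sets_measure_of)
  also have "\<dots> = sigma_sets UNIV (Collect compact)"
  proof (rule sigma_sets_eqI)
    fix C :: "(real ^ 'n) set" assume "C \<in> Collect closed"
    hence C: "closed C" by simp
    have "C = (\<Union>i. C \<inter> cball 0 (real i))"
    proof (intro equalityI subsetI)
      fix x assume "x \<in> C"
      obtain n where "norm x \<le> real n" using real_arch_simple by blast
      thus "x \<in> (\<Union>i. C \<inter> cball 0 (real i))" using \<open>x \<in> C\<close> by auto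
    qed auto
    also have "\<dots> \<in> sigma_sets UNIV (Collect compact)"
      using C by (intro sigma_sets.Union sigma_sets.Basic) (auto intro: closed_Int_compact)
    finally show "C \<in> sigma_sets UNIV (Collect compact)" .
  next
    fix K :: "(real ^ 'n) set" assume "K \<in> Collect compact"
    thus "K \<in> sigma_sets UNIV (Collect closed)" by (auto intro: sigma_sets.Basic compact_imp_closed)
  qed
  finally show ?thesis .
qed

lemma Wt_abs: "\<bar>Wt (Tp x)\<bar> \<le> 1"
  using Wt_cube[OF Tp_cube[of x]] by simp

lemma emK:
  fixes \<mu> :: "(real ^ 'n::finite) measure"
  assumes s: "sets \<mu> = sets borel" and p: "prob_space \<mu>" and pos: "AE x in \<mu>. \<forall>i. 0 \<le> x $ i"
    and K: "K \<in> sets borel"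
  shows "emeasure (density \<mu> (\<lambda>x. ennreal (Wt (Tp x)))) K
       = ennreal (\<integral>x. indicator (K \<inter> {x. \<forall>i. 0 \<le> x $ i}) x * Wt (Tp x) \<partial>\<mu>)"
proof -
  define Opos where "Opos = {x :: real ^ 'n. \<forall>i. 0 \<le> x $ i}"
  have f: "finite_measure \<mu>" using p by (simp add: prob_space_def)
  have clO: "closed Opos" unfolding Opos_def
    by (intro closed_Collect_all closed_Collect_le continuous_intros)
  have Ks: "K \<in> sets \<mu>" using K s by simp
  have KOs: "K \<inter> Opos \<in> sets \<mu>" using K clO s by (simp add: borel_closed sets.Int)
  have Wm: "(\<lambda>x. Wt (Tp x)) \<in> borel_measurable \<mu>" by (rule comp_meas[OF cont_Wt s])
  have m: "(\<lambda>x. indicator (K \<inter> Opos) x * Wt (Tp x)) \<in> borel_measurable \<mu>"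
    using KOs Wm by measurable
  have int: "integrable \<mu> (\<lambda>x. indicator (K \<inter> Opos) x * Wt (Tp x))"
  proof (rule finite_measure.integrable_const_bound[OF f _ m, where B = 1])
    show "AE x in \<mu>. norm (indicator (K \<inter> Opos) x * Wt (Tp x)) \<le> (1::real)"
      using Wt_abs by (intro AE_I2) (auto simp: indicator_def)
  qed
  have "emeasure (density \<mu> (\<lambda>x. ennreal (Wt (Tp x)))) K = (\<integral>\<^sup>+x. ennreal (Wt (Tp x)) * indicator K x \<partial>\<mu>)"
    using Wm Ks by (simp add: emeasure_density)
  also have "\<dots> = (\<integral>\<^sup>+x. ennreal (indicator (K \<inter> Opos) x * Wt (Tp x)) \<partial>\<mu>)"
  proof (rule nn_integral_cong_AE)
    show "AE x in \<mu>. ennreal (Wt (Tp x)) * indicator K x = ennreal (indicator (K \<inter> Opos) x * Wt (Tp x))"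
      using pos by eventually_elim (auto simp: Opos_def indicator_def)
  qed
  also have "\<dots> = ennreal (\<integral>x. indicator (K \<inter> Opos) x * Wt (Tp x) \<partial>\<mu>)"
    using int Wt_cube[OF Tp_cube] by (intro nn_integral_eq_integral) (auto simp: indicator_def)
  finally show ?thesis by (simp add: Opos_def)
qed

lemma density_back:
  fixes \<mu> :: "(real ^ 'n::finite) measure"
  assumes s: "sets \<mu> = sets borel"
  shows "density (density \<mu> (\<lambda>x. ennreal (Wt (Tp x)))) (\<lambda>x. ennreal (1 / Wt (Tp x))) = \<mu>"
proof -
  define w where "w = (\<lambda>x :: real ^ 'n. ennreal (Wt (Tp x)))"
  define g where "g = (\<lambda>x :: real ^ 'n. ennreal (1 / Wt (Tp x)))"
  have Wm: "(\<lambda>x. Wt (Tp x)) \<in> borel_measurable \<mu>" by (rule comp_meas[OF cont_Wt s])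
  have wm: "w \<in> borel_measurable \<mu>" unfolding w_def using Wm by measurable
  have gm: "g \<in> borel_measurable \<mu>" unfolding g_def using Wm by measurable
  have one: "(\<lambda>x. w x * g x) = (\<lambda>_. 1)"
  proof
    fix x :: "real ^ 'n"
    have p: "0 < Wt (Tp x)" by (rule Wt_Tp_pos)
    have "w x * g x = ennreal (Wt (Tp x) * (1 / Wt (Tp x)))"
      unfolding w_def g_def by (rule ennreal_mult''[symmetric]) (use p in simp)
    also have "\<dots> = 1" using p by simp
    finally show "w x * g x = 1" .
  qed
  have "density (density \<mu> w) g = \<mu>"
    by (simp add: density_density_eq[OF wm gm] one density_1)
  thus ?thesis by (simp add: w_def g_def)
qed

lemma final_eq:
  fixes M N :: "(real ^ 'n::finite) measure"
  assumes Ms: "sets M = sets borel" and Ns: "sets N = sets borel"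
    and Mp: "prob_space M" and Np: "prob_space N"
    and M0: "AE x in M. \<forall>i. 0 \<le> x $ i" and N0: "AE x in N. \<forall>i. 0 \<le> x $ i"
    and Qeq: "\<And>f. continuous_on cube f \<Longrightarrow> Q0 M f = Q0 N f"
  shows "M = N"
proof -
  define Opos where "Opos = {x :: real ^ 'n. \<forall>i. 0 \<le> x $ i}"
  have clO: "closed Opos" unfolding Opos_def
    by (intro closed_Collect_all closed_Collect_le continuous_intros)
  define w where "w x = ennreal (Wt (Tp x))" for x :: "real ^ 'n"
  define M' where "M' = density M w"
  define N' where "N' = density N w"
  have intK: "(\<integral>x. indicator K x * Wt (Tp x) \<partial>M) = (\<integral>x. indicator K x * Wt (Tp x) \<partial>N)"
    if K: "compact K" and KO: "K \<subseteq> Opos" for K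
  proof (cases "K = {}")
    case True thus ?thesis by simp
  next
    case False
    have KO': "\<And>x :: real ^ 'n. x \<in> K \<Longrightarrow> \<forall>i. 0 \<le> x $ i" using KO by (auto simp: Opos_def)
    have cf: "continuous_on cube (\<lambda>y. max 0 (1 - real j * infdist y (Tp ` K)))" for j
      by (intro continuous_intros continuous_on_infdist)
    have "(\<lambda>j. Q0 M (\<lambda>y. max 0 (1 - real j * infdist y (Tp ` K)))) \<longlonglongrightarrow> (\<integral>x. indicator K x * Wt (Tp x) \<partial>N)"
      unfolding Qeq[OF cf] by (rule lim_ind[OF Ns Np N0 K KO' False])
    with lim_ind[OF Ms Mp M0 K KO' False] show ?thesis by (rule LIMSEQ_unique)
  qed
  have eqK: "emeasure M' K = emeasure N' K" if K: "compact K" for K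
  proof -
    have Kb: "K \<in> sets borel" using K by (simp add: compact_imp_closed borel_closed)
    have "compact (K \<inter> Opos)" using K clO by (rule compact_Int_closed)
    hence "(\<integral>x. indicator (K \<inter> Opos) x * Wt (Tp x) \<partial>M) = (\<integral>x. indicator (K \<inter> Opos) x * Wt (Tp x) \<partial>N)"
      by (rule intK) auto
    thus ?thesis
      unfolding M'_def N'_def w_def emK[OF Ms Mp M0 Kb] emK[OF Ns Np N0 Kb] by (simp add: Opos_def)
  qed
  have fin: "emeasure M' X \<noteq> \<infinity>" for X
  proof -
    have Wm: "w \<in> borel_measurable M" unfolding w_def using comp_meas[OF cont_Wt Ms] by measurable
    have "emeasure M' X \<le> emeasure M' (space M')" by (rule emeasure_space)
    also have "\<dots> = (\<integral>\<^sup>+x. w x * indicator (space M) x \<partial>M)"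
      unfolding M'_def using Wm by (simp add: emeasure_density)
    also have "\<dots> \<le> (\<integral>\<^sup>+x. 1 \<partial>M)"
      using Wt_cube[OF Tp_cube] by (intro nn_integral_mono) (auto simp: w_def indicator_def)
    also have "\<dots> = 1" using prob_space.emeasure_space_1[OF Mp] by simp
    finally show ?thesis by (auto simp: top_unique)
  qed
  have M'N': "M' = N'"
  proof (rule measure_eqI_generator_eq[where E = "Collect compact" and \<Omega> = UNIV and A = "\<lambda>i. cball 0 (real i)"])
    show "Int_stable (Collect compact :: (real ^ 'n) set set)"
      by (auto simp: Int_stable_def intro: compact_Int)
    show "Collect compact \<subseteq> Pow (UNIV :: (real ^ 'n) set)" by simp
    show "\<And>X. X \<in> Collect compact \<Longrightarrow> emeasure M' X = emeasure N' X" using eqK by simp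
    show "sets M' = sigma_sets UNIV (Collect compact)" unfolding M'_def using Ms sets_borel_compact by simp
    show "sets N' = sigma_sets UNIV (Collect compact)" unfolding N'_def using Ns sets_borel_compact by simp
    show "range (\<lambda>i. cball (0 :: real ^ 'n) (real i)) \<subseteq> Collect compact" by auto
    show "(\<Union>i. cball (0 :: real ^ 'n) (real i)) = UNIV"
    proof (intro equalityI subsetI)
      fix x :: "real ^ 'n"
      obtain n where "norm x \<le> real n" using real_arch_simple by blast
      thus "x \<in> (\<Union>i. cball 0 (real i))" by auto
    qed auto
    show "\<And>i. emeasure M' (cball 0 (real i)) \<noteq> \<infinity>" by (rule fin)
  qed
  define g where "g x = ennreal (1 / Wt (Tp x))" for x :: "real ^ 'n"
  have dback: "\<And>\<mu>. sets \<mu> = sets borel \<Longrightarrow> density (density \<mu> w) g = \<mu>"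
    unfolding w_def g_def by (rule density_back)
  have "M = density M' g" unfolding M'_def using dback[OF Ms] by simp
  also have "\<dots> = density N' g" by (simp add: M'N')
  also have "\<dots> = N" unfolding N'_def using dback[OF Ns] by simp
  finally show ?thesis .
qed


theorem theorem5:
  fixes m :: "'n::finite \<Rightarrow> nat \<Rightarrow> real"
    and M N :: "(real ^ 'n) measure"
  assumes n3: "CARD('n) \<ge> 3"
    and pos: "\<And>i. 0 < m i 0"
    and incr: "\<And>i. strict_mono (m i)"
    and diverge: "\<And>i. \<not> summable (\<lambda>j. 1 / m i j)"
    and M: "distribution_on_Rplus M"
    and N: "distribution_on_Rplus N"
    and agree: "\<And>j :: 'n \<Rightarrow> nat.
       laplace_stieltjes M (\<chi> i. m i (j i)) = laplace_stieltjes N (\<chi> i. m i (j i))"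
  shows "M = N"
proof -
  have Ms: "sets M = sets borel" and Mp: "prob_space M" and M0: "AE x in M. \<forall>i. 0 \<le> x $ i"
    using M by (auto simp: distribution_on_Rplus_def)
  have Ns: "sets N = sets borel" and Np: "prob_space N" and N0: "AE x in N. \<forall>i. 0 \<le> x $ i"
    using N by (auto simp: distribution_on_Rplus_def)
  have L: "\<And>s. (\<forall>i. 0 < s $ i) \<Longrightarrow> laplace_stieltjes M s = laplace_stieltjes N s"
    by (rule laplace_all_pos[OF pos incr diverge M N agree])
  have monoeq: "Q0 M (mnm k) = Q0 N (mnm k)" for k
  proof -
    have "\<forall>i. 0 < (\<chi> i. real (k i) + 1 :: real ^ 'n) $ i" by simp
    hence "laplace_stieltjes M (\<chi> i. real (k i) + 1) = laplace_stieltjes N (\<chi> i. real (k i) + 1)" by (rule L)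
    thus ?thesis using Q0_mnm[OF Ms M0, of k] Q0_mnm[OF Ns N0, of k] by simp
  qed
  have Qeq: "\<And>f. continuous_on cube f \<Longrightarrow> Q0 M f = Q0 N f"
    by (rule cont_equal[OF Ms Ns Mp Np monoeq])
  show ?thesis by (rule final_eq[OF Ms Ns Mp Np M0 N0 Qeq])
qed

end
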